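(* Let $B$ be an $n\times n$ skew-symmetrizable matrix, $\mathbf d$ positive integers, $D=\mathrm{diag}(d_1,\dots,d_n)$. For every vertex $t$ of $\mathbb T_n$, the $G$-matrix $G^t$ of the $(\mathbf d,\mathbf z)$-cluster pattern with principal coefficients and initial seed $(\mathbf x,\mathbf y,B)$ coincides with the $G$-matrix at $t$ of the ordinary cluster pattern with principal coefficients and initial seed $(\mathbf x,\mathbf y,BD)$.
   Context: All matrices are integer, $[a]_+=\max(a,0)$; $BD$ is skew-symmetrizable. A semifield is an abelian multiplicative group with a commutative associative $\oplus$ over which multiplication distributes; $\mathcal F=\mathbb Q\mathbb P(w_1,\dots,w_n)$. Mutation data: positive integers $\mathbf d$ and $z_{i,s}$ ($1\le s\le d_i-1$) with $z_{i,s}=z_{i,d_i-s}$, $z_{i,0}=z_{i,d_i}=1$. The $(\mathbf d,\mathbf z)$-mutation $\mu_k(\mathbf{x},\mathbf{y},B)=(\mathbf{x}',\mathbf{y}',B')$ of a seed (skew-symmetrizable $B=(b_{ij})$, $\mathbf x\in\mathcal F^n$, $\mathbf y\in\mathbb P^n$): $b'_{ij}=-b_{ij}$ if $i=k$ or $j=k$, else $b'_{ij}=b_{ij}+d_k([-b_{ik}]_+b_{kj}+b_{ik}[b_{kj}]_+)$; $y'_k=y_k^{-1}$, $y'_i=y_i(y_k^{[\varepsilon b_{ki}]_+})^{d_k}(\bigoplus_{s=0}^{d_k}z_{k,s}y_k^{\varepsilon s})^{-b_{ki}}$ ($i\ne k$); $x'_i=x_i$ ($i\ne k$), $x'_k=x_k^{-1}(\prod_jx_j^{[-\varepsilon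 b_{jk}]_+})^{d_k}\frac{\sum_{s=0}^{d_k}z_{k,s}\hat y_k^{\varepsilon s}}{\bigoplus_{s=0}^{d_k}z_{k,s}y_k^{\varepsilon s}}$, $\hat y_i=y_i\prod_jx_j^{b_{ji}}$, $\varepsilon=\pm1$. $\mathbb T_n$ is the $n$-regular tree with edges labeled $1,\dots,n$, distinct labels at each vertex; a cluster pattern assigns seeds to vertices related by $\mu_k$ along edges labeled $k$, initial seed at fixed $t_0$. Principal coefficients: $\mathrm{Trop}(\mathbf y,\mathbf z)$ is the free abelian group generated by formal $y_1,\dots,y_n$, $z_{i,s}$ ($z_{i,s}=z_{i,d_i-s}$), with $\oplus$ the componentwise minimum of exponents; the pattern with principal coefficients lives in it with initial seed $(\mathbf x,\mathbf y,B)$. Each $x^t_i$ equals an $X$-function $X^t_i\in\mathbb Z[x_1^{\pm1},\dots,x_n^{\pm1},\mathbf y,\mathbf z]$, homogeneous for the grading $\deg x_i=\mathbf e_i$, $\deg y_j=-\sum_ib_{ij}\mathbf e_i$ ($B$ the initial matrix), $\deg z_{i,s}=0$; $\deg X^t_j=\sum_ig^t_{ij}\mathbf e_i$ defines $G^t=(g^t_{ij})$. The ordinary cluster pattern with principal coefficients is the special case $\mathbf d=(1,\dots,1)$ (no $\mathbf z$), with $G$-matrices defined the same way (using its own initial matrix for the grading). *)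

theory Defs
  imports Complex_Main
begin

text \<open>Indices are 0..<n (the paper uses 1..n).  Integer matrices are nat \<Rightarrow> nat \<Rightarrow> int,
only entries with indices < n matter.\<close>

definition pos :: "int \<Rightarrow> int" where "pos a = max a 0"

definition skew_symmetrizable :: "nat \<Rightarrow> (nat \<Rightarrow> nat \<Rightarrow> int) \<Rightarrow> bool" where
  "skew_symmetrizable n B \<longleftrightarrow>
     (\<exists>r::nat \<Rightarrow> int. (\<forall>i<n. r i > 0) \<and> (\<forall>i<n. \<forall>j<n. r i * B i j = - (r j * B j i)))"

text \<open>Formal generators of the principal coefficient group Trop(y,z):
  Y j is y_j, Z i s is z_{i,s} for the canonical representative 1 \<le> s \<le> d_i/2
  (using z_{i,s} = z_{i,d_i-s}).  Elements of Trop(y,z) are integer exponent vectors.\<close>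
datatype var = Y nat | Z nat nat

type_synonym trop = "var \<Rightarrow> int"

text \<open>Exponent vector of z_{i,s}, with z_{i,0} = z_{i,d_i} = 1 and z_{i,s} = z_{i,d_i-s}.\<close>
definition zvec :: "(nat \<Rightarrow> nat) \<Rightarrow> nat \<Rightarrow> nat \<Rightarrow> trop" where
  "zvec d i s = (if s = 0 \<or> d i \<le> s then (\<lambda>_. 0)
                 else (\<lambda>v. if v = Z i (min s (d i - s)) then 1 else 0))"

definition yvec :: "nat \<Rightarrow> trop" where
  "yvec j = (\<lambda>v. if v = Y j then 1 else 0)"

definition gens :: "nat \<Rightarrow> (nat \<Rightarrow> nat) \<Rightarrow> var set" where
  "gens n d = Y ` {..<n} \<union> {Z i s | i s. i < n \<and> 1 \<le> s \<and> 2 * s \<le> d i}"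

definition mono :: "nat \<Rightarrow> (nat \<Rightarrow> nat) \<Rightarrow> (var \<Rightarrow> real) \<Rightarrow> trop \<Rightarrow> real" where
  "mono n d w e = (\<Prod>v\<in>gens n d. w v powi e v)"

text \<open>Elements of the ambient field of rational functions in x, y, z are represented by their
  evaluation functions at positive real points (x-values, values of y and z).\<close>
type_synonym fn = "(nat \<Rightarrow> real) \<Rightarrow> (var \<Rightarrow> real) \<Rightarrow> real"

type_synonym seed = "(nat \<Rightarrow> fn) \<times> (nat \<Rightarrow> trop) \<times> (nat \<Rightarrow> nat \<Rightarrow> int)"

definition mutB :: "(nat \<Rightarrow> nat) \<Rightarrow> nat \<Rightarrow> (nat \<Rightarrow> nat \<Rightarrow> int) \<Rightarrow> (nat \<Rightarrow> nat \<Rightarrow> int)" where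
  "mutB d k B = (\<lambda>i j. if i = k \<or> j = k then - B i j
      else B i j + int (d k) * (pos (- B i k) * B k j + B i k * pos (B k j)))"

text \<open>Tropical sum (componentwise min) \<Oplus>_{s=0}^{d_k} z_{k,s} y_k^{\<epsilon> s}.\<close>
definition tsum :: "(nat \<Rightarrow> nat) \<Rightarrow> int \<Rightarrow> nat \<Rightarrow> trop \<Rightarrow> trop" where
  "tsum d eps k yk = (\<lambda>v. Min ((\<lambda>s. zvec d k s v + eps * int s * yk v) ` {0..d k}))"

definition mutY :: "(nat \<Rightarrow> nat) \<Rightarrow> int \<Rightarrow> nat \<Rightarrow> (nat \<Rightarrow> nat \<Rightarrow> int) \<Rightarrow> (nat \<Rightarrow> trop) \<Rightarrow> (nat \<Rightarrow> trop)" where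
  "mutY d eps k B y = (\<lambda>i. if i = k then (\<lambda>v. - y k v)
      else (\<lambda>v. y i v + int (d k) * pos (eps * B k i) * y k v - B k i * tsum d eps k (y k) v))"

definition mutX :: "nat \<Rightarrow> (nat \<Rightarrow> nat) \<Rightarrow> int \<Rightarrow> nat \<Rightarrow> (nat \<Rightarrow> nat \<Rightarrow> int)
                     \<Rightarrow> (nat \<Rightarrow> trop) \<Rightarrow> (nat \<Rightarrow> fn) \<Rightarrow> (nat \<Rightarrow> fn)" where
  "mutX n d eps k B y X = (\<lambda>i. if i \<noteq> k then X i else
     (\<lambda>x w. let yhat = mono n d w (y k) * (\<Prod>j<n. X j x w powi B j k) in
        X k x w powi (-1) * (\<Prod>j<n. X j x w powi pos (- eps * B j k)) ^ d k
        * (\<Sum>s = 0..d k. mono n d w (zvec d k s) * yhat powi (eps * int s))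
        / mono n d w (tsum d eps k (y k))))"

definition mut :: "nat \<Rightarrow> (nat \<Rightarrow> nat) \<Rightarrow> int \<Rightarrow> nat \<Rightarrow> seed \<Rightarrow> seed" where
  "mut n d eps k S = (case S of (X, y, B) \<Rightarrow> (mutX n d eps k B y X, mutY d eps k B y, mutB d k B))"

text \<open>Vertices of T_n: reduced words (no two adjacent equal labels) of labels < n,
  encoding the path from t_0.\<close>
definition vertex :: "nat \<Rightarrow> nat list \<Rightarrow> bool" where
  "vertex n ks \<longleftrightarrow> set ks \<subseteq> {..<n} \<and> (\<forall>i. Suc i < length ks \<longrightarrow> ks ! i \<noteq> ks ! Suc i)"

definition seed0 :: "(nat \<Rightarrow> nat \<Rightarrow> int) \<Rightarrow> seed" where
  "seed0 B = ((\<lambda>i x w. x i), yvec, B)"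

definition pattern :: "nat \<Rightarrow> (nat \<Rightarrow> nat) \<Rightarrow> (nat \<Rightarrow> nat \<Rightarrow> int) \<Rightarrow> nat list \<Rightarrow> seed" where
  "pattern n d B ks = foldl (\<lambda>S k. mut n d 1 k S) (seed0 B) ks"

definition Xfun :: "nat \<Rightarrow> (nat \<Rightarrow> nat) \<Rightarrow> (nat \<Rightarrow> nat \<Rightarrow> int) \<Rightarrow> nat list \<Rightarrow> nat \<Rightarrow> fn" where
  "Xfun n d B ks j = fst (pattern n d B ks) j"

text \<open>Torus action realising the Z^n-grading deg x_i = e_i, deg y_j = - \<Sum>_i b_ij e_i, deg z = 0.\<close>
definition scaleX :: "(nat \<Rightarrow> real) \<Rightarrow> (nat \<Rightarrow> real) \<Rightarrow> (nat \<Rightarrow> real)" where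
  "scaleX lam x = (\<lambda>i. lam i * x i)"

definition scaleW :: "nat \<Rightarrow> (nat \<Rightarrow> nat \<Rightarrow> int) \<Rightarrow> (nat \<Rightarrow> real) \<Rightarrow> (var \<Rightarrow> real) \<Rightarrow> (var \<Rightarrow> real)" where
  "scaleW n B lam w = (\<lambda>v. case v of
       Y j \<Rightarrow> w (Y j) * (\<Prod>i<n. lam i powi (- B i j))
     | Z i s \<Rightarrow> w (Z i s))"

definition is_deg :: "nat \<Rightarrow> (nat \<Rightarrow> nat \<Rightarrow> int) \<Rightarrow> fn \<Rightarrow> (nat \<Rightarrow> int) \<Rightarrow> bool" where
  "is_deg n B f g \<longleftrightarrow> (\<forall>i\<ge>n. g i = 0) \<and>
     (\<forall>x w lam. (\<forall>i<n. x i > 0) \<longrightarrow> (\<forall>v. w v > 0) \<longrightarrow> (\<forall>i<n. lam i > 0) \<longrightarrow>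
        f (scaleX lam x) (scaleW n B lam w) = (\<Prod>i<n. lam i powi g i) * f x w)"

definition Gmat :: "nat \<Rightarrow> (nat \<Rightarrow> nat) \<Rightarrow> (nat \<Rightarrow> nat \<Rightarrow> int) \<Rightarrow> nat list \<Rightarrow> nat \<Rightarrow> nat \<Rightarrow> int" where
  "Gmat n d B ks i j = (THE g. is_deg n B (Xfun n d B ks j) g) i"

definition matD :: "(nat \<Rightarrow> nat \<Rightarrow> int) \<Rightarrow> (nat \<Rightarrow> nat) \<Rightarrow> (nat \<Rightarrow> nat \<Rightarrow> int)" where
  "matD B d = (\<lambda>i j. B i j * int (d j))"

end

theory Submission
  imports Defs
begin


lemma powi_sum: "(x::real) \<noteq> 0 \<Longrightarrow> x powi (\<Sum>j\<in>A. f j) = (\<Prod>j\<in>A. x powi f j)"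
proof (induction A rule: infinite_finite_induct)
  case (insert a A) then show ?case by (simp add: power_int_add)
qed auto

lemma prod_powi: "(\<Prod>j\<in>A. (f j::real)) powi c = (\<Prod>j\<in>A. f j powi c)"
proof (induction A rule: infinite_finite_induct)
  case (insert a A) then show ?case by (simp add: power_int_mult_distrib)
qed auto

definition Lam :: "nat \<Rightarrow> (nat \<Rightarrow> real) \<Rightarrow> (nat \<Rightarrow> int) \<Rightarrow> real" where
  "Lam n lam g = (\<Prod>i<n. lam i powi g i)"

definition tdeg :: "nat \<Rightarrow> (nat \<Rightarrow> nat \<Rightarrow> int) \<Rightarrow> trop \<Rightarrow> nat \<Rightarrow> int" where
  "tdeg n B0 e = (\<lambda>i. if i < n then - (\<Sum>j<n. B0 i j * e (Y j)) else 0)"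

lemma Lam_cong: "(\<And>i. i < n \<Longrightarrow> a i = b i) \<Longrightarrow> Lam n lam a = Lam n lam b"
  unfolding Lam_def by (rule prod.cong) auto

lemma Lam_pos: "\<forall>i<n. lam i > 0 \<Longrightarrow> Lam n lam a > 0"
  unfolding Lam_def by (rule prod_pos) auto

lemma Lam_add: "\<forall>i<n. lam i > 0 \<Longrightarrow> Lam n lam (\<lambda>i. a i + b i) = Lam n lam a * Lam n lam b"
  unfolding Lam_def prod.distrib[symmetric] by (rule prod.cong) (auto simp: power_int_add)

lemma Lam_zero: "Lam n lam (\<lambda>i. 0) = 1"
  unfolding Lam_def by simp

lemma Lam_powi: "Lam n lam a powi c = Lam n lam (\<lambda>i. c * a i)"
  unfolding Lam_def prod_powi by (rule prod.cong) (auto simp: power_int_mult[symmetric] mult.commute)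

lemma Lam_pow: "Lam n lam a ^ m = Lam n lam (\<lambda>i. int m * a i)"
  using Lam_powi[of n lam a "int m"] by simp

lemma Lam_inv: "Lam n lam a powi (-1) = Lam n lam (\<lambda>i. - a i)"
  using Lam_powi[of n lam a "-1"] by simp

lemma Lam_prod: "\<forall>i<n. lam i > 0 \<Longrightarrow> (\<Prod>j\<in>A. Lam n lam (f j)) = Lam n lam (\<lambda>i. \<Sum>j\<in>A. f j i)"
proof -
  assume lp: "\<forall>i<n. lam i > 0"
  have "(\<Prod>i<n. lam i powi (\<Sum>j\<in>A. f j i)) = (\<Prod>i<n. \<Prod>j\<in>A. lam i powi f j i)"
    by (rule prod.cong) (use lp in \<open>auto simp: powi_sum\<close>)
  also have "\<dots> = (\<Prod>j\<in>A. \<Prod>i<n. lam i powi f j i)" by (rule prod.swap)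
  finally show ?thesis unfolding Lam_def by simp
qed

lemma Lam_div: "\<forall>i<n. lam i > 0 \<Longrightarrow> Lam n lam a / Lam n lam b = Lam n lam (\<lambda>i. a i - b i)"
proof -
  assume h: "\<forall>i<n. lam i > 0"
  have "Lam n lam a = Lam n lam (\<lambda>i. a i - b i) * Lam n lam b"
    using Lam_add[OF h, of "\<lambda>i. a i - b i" b] by simp
  then show ?thesis using Lam_pos[OF h, of b] by simp
qed

lemma finite_gens: "finite (gens n d)"
proof -
  have "{Z i s | i s. i < n \<and> 1 \<le> s \<and> 2 * s \<le> d i} \<subseteq> (\<lambda>(i,s). Z i s) ` (SIGMA i:{..<n}. {..d i})"
    by auto
  then have "finite {Z i s | i s. i < n \<and> 1 \<le> s \<and> 2 * s \<le> d i}"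
    by (rule finite_subset) auto
  then show ?thesis unfolding gens_def by auto
qed

lemma mono_scale:
  assumes lp: "\<forall>i<n. lam i > 0"
  shows "mono n d (scaleW n B0 lam w) e = Lam n lam (tdeg n B0 e) * mono n d w e"
proof -
  define ZS where "ZS = {Z i s | i s. i < n \<and> 1 \<le> s \<and> 2 * s \<le> d i}"
  have fZ: "finite ZS" using finite_gens[of n d] unfolding gens_def ZS_def by auto
  have g: "gens n d = Y ` {..<n} \<union> ZS" unfolding gens_def ZS_def by auto
  have dis: "Y ` {..<n} \<inter> ZS = {}" unfolding ZS_def by auto
  have injY: "inj_on Y {..<n}" by (auto simp: inj_on_def)
  have pz: "(\<Prod>v\<in>ZS. scaleW n B0 lam w v powi e v) = (\<Prod>v\<in>ZS. w v powi e v)"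
    by (rule prod.cong) (auto simp: ZS_def scaleW_def)
  have "(\<Prod>v\<in>Y ` {..<n}. scaleW n B0 lam w v powi e v)
      = (\<Prod>j<n. (w (Y j) * (\<Prod>i<n. lam i powi (- B0 i j))) powi e (Y j))"
    by (simp add: prod.reindex[OF injY] scaleW_def)
  also have "\<dots> = (\<Prod>j<n. w (Y j) powi e (Y j)) * (\<Prod>j<n. \<Prod>i<n. lam i powi (- B0 i j * e (Y j)))"
    unfolding prod.distrib[symmetric]
    by (rule prod.cong) (auto simp: power_int_mult_distrib prod_powi power_int_mult[symmetric])
  also have "(\<Prod>j<n. \<Prod>i<n. lam i powi (- B0 i j * e (Y j))) = Lam n lam (tdeg n B0 e)"
  proof -
    have "(\<Prod>j<n. \<Prod>i<n. lam i powi (- B0 i j * e (Y j))) = (\<Prod>j<n. Lam n lam (\<lambda>i. - B0 i j * e (Y j)))"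
      unfolding Lam_def by simp
    also have "\<dots> = Lam n lam (\<lambda>i. \<Sum>j<n. - B0 i j * e (Y j))" by (rule Lam_prod[OF lp])
    also have "\<dots> = Lam n lam (tdeg n B0 e)"
      by (rule Lam_cong) (simp add: tdeg_def sum_negf)
    finally show ?thesis .
  qed
  also have "(\<Prod>j<n. w (Y j) powi e (Y j)) = (\<Prod>v\<in>Y ` {..<n}. w v powi e v)"
    by (simp add: prod.reindex[OF injY])
  finally have py: "(\<Prod>v\<in>Y ` {..<n}. scaleW n B0 lam w v powi e v) =
     (\<Prod>v\<in>Y ` {..<n}. w v powi e v) * Lam n lam (tdeg n B0 e)" by simp
  show ?thesis unfolding mono_def g
    by (simp add: prod.union_disjoint[OF _ fZ dis] pz py)
qed



lemma zvec_Y[simp]: "zvec d k s (Y j) = 0"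
  unfolding zvec_def by auto

lemma tdeg_zvec: "tdeg n B0 (zvec d k s) = (\<lambda>i. 0)"
  unfolding tdeg_def by auto

lemma min_mult_int: "Min ((\<lambda>s. int s * c) ` {0..m}) = int m * min 0 c"
proof (rule Min_eqI)
  show "finite ((\<lambda>s. int s * c) ` {0..m})" by simp
next
  fix y assume "y \<in> (\<lambda>s. int s * c) ` {0..m}"
  then obtain s where s: "s \<le> m" "y = int s * c" by auto
  show "int m * min 0 c \<le> y"
  proof (cases "c \<ge> 0")
    case True then show ?thesis using s by simp
  next
    case False
    then have "int m * c \<le> int s * c" using s by (simp add: mult_right_mono_neg)
    then show ?thesis using False s by simp
  qed
next
  show "int m * min 0 c \<in> (\<lambda>s. int s * c) ` {0..m}"
  proof (cases "c \<ge> 0")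
    case True then show ?thesis by (auto intro!: image_eqI[where x=0])
  next
    case False then show ?thesis by (auto intro!: image_eqI[where x=m])
  qed
qed

lemma tsum_Y: "tsum d 1 k yk (Y j) = int (d k) * min 0 (yk (Y j))"
  unfolding tsum_def using min_mult_int[of "yk (Y j)" "d k"] by simp

lemma pos_mult: "(c::int) \<ge> 0 \<Longrightarrow> pos (c * a) = c * pos a"
proof (cases "a \<ge> 0")
  case True
  assume c: "c \<ge> 0"
  then have "c * a \<ge> 0" using True by simp
  then show ?thesis using True unfolding pos_def by simp
next
  case False
  assume c: "c \<ge> 0"
  then have "c * a \<le> 0" using False by (simp add: mult_nonneg_nonpos)
  then show ?thesis using False unfolding pos_def by simp
qed

lemma skew_mut:
  assumes "skew_symmetrizable n B" "k < n" shows "skew_symmetrizable n (mutB d k B)"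
proof -
  obtain r where rp: "\<forall>i<n. r i > 0" and rs: "\<forall>i<n. \<forall>j<n. r i * B i j = - (r j * B j i)"
    using assms unfolding skew_symmetrizable_def by auto
  have "\<forall>i<n. \<forall>j<n. r i * mutB d k B i j = - (r j * mutB d k B j i)"
  proof (intro allI impI)
    fix i j assume ij: "i < n" "j < n"
    show "r i * mutB d k B i j = - (r j * mutB d k B j i)"
    proof (cases "i = k \<or> j = k")
      case True
      then have "mutB d k B i j = - B i j" "mutB d k B j i = - B j i" by (auto simp: mutB_def)
      moreover have "r i * B i j = - (r j * B j i)" using rs ij by blast
      ultimately show ?thesis by simp
    next
      case False
      have k: "k < n" by fact
      define D where "D = int (d k)"
      have m1: "mutB d k B i j = B i j + D * (pos (- B i k) * B k j + B i k * pos (B k j))"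
        using False by (simp add: mutB_def D_def)
      have m2: "mutB d k B j i = B j i + D * (pos (- B j k) * B k i + B j k * pos (B k i))"
        using False by (simp add: mutB_def D_def)
      have F3: "r i * B i k = - (r k * B k i)" using rs ij k by blast
      have F4: "r k * B k j = - (r j * B j k)" using rs ij k by blast
      have F5: "r i * B i j = - (r j * B j i)" using rs ij by blast
      have F1: "r i * pos (- B i k) = r k * pos (B k i)"
      proof -
        have "r i * pos (- B i k) = pos (r i * (- B i k))" using pos_mult[of "r i" "- B i k"] rp ij by (simp add: less_imp_le)
        also have "\<dots> = pos (r k * B k i)" using F3 by simp
        also have "\<dots> = r k * pos (B k i)" using rp k by (simp add: pos_mult less_imp_le)
        finally show ?thesis .
      qed
      have F2: "r k * pos (B k j) = r j * pos (- B j k)"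
      proof -
        have "r k * pos (B k j) = pos (r k * B k j)" using rp k by (simp add: pos_mult less_imp_le)
        also have "\<dots> = pos (r j * (- B j k))" using F4 by simp
        also have "\<dots> = r j * pos (- B j k)" using pos_mult[of "r j" "- B j k"] rp ij by (simp add: less_imp_le)
        finally show ?thesis .
      qed
      have "r i * mutB d k B i j = r i * B i j + D * ((r i * pos (- B i k)) * B k j + (r i * B i k) * pos (B k j))"
        unfolding m1 by (simp add: algebra_simps)
      also have "\<dots> = r i * B i j + D * (pos (B k i) * (r k * B k j) - B k i * (r k * pos (B k j)))"
        unfolding F1 F3 by (simp add: algebra_simps)
      also have "\<dots> = - (r j * mutB d k B j i)"
        unfolding F2 F4 F5 m2 by (simp add: algebra_simps)
      finally show ?thesis .
    qed
  qed
  then show ?thesis using rp unfolding skew_symmetrizable_def by auto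
qed



lemma h_step:
  fixes b :: "nat \<Rightarrow> nat \<Rightarrow> int" and g a :: "nat \<Rightarrow> int" and D T :: int
  assumes k: "k < n" and i': "i' < n" and bkk: "b k k = 0"
    and h: "\<forall>k'<n. a k' + (\<Sum>j<n. b j k' * g j) = 0"
  shows "(if i' = k then - a k else a i' + D * pos (b k i') * a k - b k i' * T)
   + (\<Sum>j<n. (if j = k \<or> i' = k then - b j i' else b j i' + D * (pos (- b j k) * b k i' + b j k * pos (b k i')))
        * (if j = k then - g k + D * (\<Sum>j<n. pos (- b j k) * g j) - T else g j)) = 0"
proof -
  define A where "A = {..<n} - {k}"
  have kin: "k \<in> {..<n}" using k by simp
  have split: "\<And>f. (\<Sum>j<n. f j) = f k + (\<Sum>j\<in>A. f j)"
    unfolding A_def by (rule sum.remove[OF _ kin]) simp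
  have kA: "k \<notin> A" unfolding A_def by simp
  have hk0: "a k + (\<Sum>j<n. b j k * g j) = 0" using h k by blast
  have hk: "a k + (\<Sum>j\<in>A. b j k * g j) = 0" using hk0 split[of "\<lambda>j. b j k * g j"] bkk by simp
  have hi0: "a i' + (\<Sum>j<n. b j i' * g j) = 0" using h i' by blast
  have hi: "a i' + b k i' * g k + (\<Sum>j\<in>A. b j i' * g j) = 0" using hi0 split[of "\<lambda>j. b j i' * g j"] by simp
  have P: "(\<Sum>j<n. pos (- b j k) * g j) = (\<Sum>j\<in>A. pos (- b j k) * g j)"
    using split[of "\<lambda>j. pos (- b j k) * g j"] bkk by (simp add: pos_def)
  show ?thesis
  proof (cases "i' = k")
    case True
    have "(\<Sum>j\<in>A. (if j = k \<or> i' = k then - b j i' else b j i' + D * (pos (- b j k) * b k i' + b j k * pos (b k i')))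
        * (if j = k then - g k + D * (\<Sum>j<n. pos (- b j k) * g j) - T else g j)) = - (\<Sum>j\<in>A. b j k * g j)"
      using kA True by (simp add: sum_negf[symmetric]) (rule sum.cong, auto)
    then show ?thesis using True split[of "\<lambda>j. (if j = k \<or> i' = k then - b j i' else b j i' + D * (pos (- b j k) * b k i' + b j k * pos (b k i')))
        * (if j = k then - g k + D * (\<Sum>j<n. pos (- b j k) * g j) - T else g j)"] hk bkk by simp
  next
    case False
    have "(\<Sum>j\<in>A. (if j = k \<or> i' = k then - b j i' else b j i' + D * (pos (- b j k) * b k i' + b j k * pos (b k i')))
        * (if j = k then - g k + D * (\<Sum>j<n. pos (- b j k) * g j) - T else g j))
      = (\<Sum>j\<in>A. b j i' * g j) + D * b k i' * (\<Sum>j\<in>A. pos (- b j k) * g j) - D * pos (b k i') * a k"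
    proof -
      have "(\<Sum>j\<in>A. (if j = k \<or> i' = k then - b j i' else b j i' + D * (pos (- b j k) * b k i' + b j k * pos (b k i')))
        * (if j = k then - g k + D * (\<Sum>j<n. pos (- b j k) * g j) - T else g j))
        = (\<Sum>j\<in>A. b j i' * g j + (D * b k i') * (pos (- b j k) * g j) + (D * pos (b k i')) * (b j k * g j))"
        using kA False by (intro sum.cong) (auto simp: algebra_simps)
      also have "\<dots> = (\<Sum>j\<in>A. b j i' * g j) + D * b k i' * (\<Sum>j\<in>A. pos (- b j k) * g j) + D * pos (b k i') * (\<Sum>j\<in>A. b j k * g j)"
        by (simp add: sum.distrib sum_distrib_left)
      also have "(\<Sum>j\<in>A. b j k * g j) = - a k" using hk by simp
      finally show ?thesis by simp
    qed
    then show ?thesis using False split[of "\<lambda>j. (if j = k \<or> i' = k then - b j i' else b j i' + D * (pos (- b j k) * b k i' + b j k * pos (b k i')))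
        * (if j = k then - g k + D * (\<Sum>j<n. pos (- b j k) * g j) - T else g j)"] P hi
      by (simp add: algebra_simps)
  qed
qed



definition newg :: "nat \<Rightarrow> (nat \<Rightarrow> nat) \<Rightarrow> (nat \<Rightarrow> nat \<Rightarrow> int) \<Rightarrow> nat \<Rightarrow> (nat \<Rightarrow> nat \<Rightarrow> int)
    \<Rightarrow> (nat \<Rightarrow> trop) \<Rightarrow> (nat \<Rightarrow> nat \<Rightarrow> int) \<Rightarrow> (nat \<Rightarrow> nat \<Rightarrow> int)" where
  "newg n d B0 k Bt y g = g(k := (\<lambda>i. if i < n then - g k i + int (d k) * (\<Sum>j<n. pos (- Bt j k) * g j i)
       - tdeg n B0 (tsum d 1 k (y k)) i else 0))"

definition Inv :: "nat \<Rightarrow> (nat \<Rightarrow> nat) \<Rightarrow> (nat \<Rightarrow> nat \<Rightarrow> int) \<Rightarrow> seed \<Rightarrow> (nat \<Rightarrow> nat \<Rightarrow> int) \<Rightarrow> bool" where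
  "Inv n d B0 S g \<longleftrightarrow> (case S of (X, y, Bt) \<Rightarrow>
     (\<forall>j<n. is_deg n B0 (X j) (g j)) \<and>
     (\<forall>j<n. \<forall>x w. (\<forall>i<n. x i > 0) \<longrightarrow> (\<forall>v. w v > 0) \<longrightarrow> X j x w > 0) \<and>
     (\<forall>k<n. \<forall>i<n. tdeg n B0 (y k) i + (\<Sum>j<n. Bt j k * g j i) = 0) \<and>
     skew_symmetrizable n Bt)"

lemma tdeg_lin: "tdeg n B0 (\<lambda>v. e1 v + c * e2 v - c' * e3 v) i = tdeg n B0 e1 i + c * tdeg n B0 e2 i - c' * tdeg n B0 e3 i"
  unfolding tdeg_def by (simp add: algebra_simps sum.distrib sum_subtractf sum_distrib_left)

lemma tdeg_neg: "tdeg n B0 (\<lambda>v. - e v) i = - tdeg n B0 e i"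
  unfolding tdeg_def by (simp add: sum_negf)

lemma mono_pos: "\<forall>v. w v > 0 \<Longrightarrow> mono n d w e > 0"
  unfolding mono_def by (rule prod_pos) auto

lemma skew_diag: "skew_symmetrizable n B \<Longrightarrow> k < n \<Longrightarrow> B k k = 0"
  unfolding skew_symmetrizable_def by (metis mult_eq_0_iff neg_equal_zero order_less_irrefl)

lemma mutX_k: "mutX n d 1 k Bt y X k = (\<lambda>x w.
   X k x w powi (-1) * (\<Prod>j<n. X j x w powi pos (- Bt j k)) ^ d k
        * (\<Sum>s = 0..d k. mono n d w (zvec d k s) * (mono n d w (y k) * (\<Prod>j<n. X j x w powi Bt j k)) powi int s)
        / mono n d w (tsum d 1 k (y k)))"
  unfolding mutX_def by (simp add: Let_def)

lemma mutX_other: "j \<noteq> k \<Longrightarrow> mutX n d eps k Bt y X j = X j"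
  unfolding mutX_def by simp



lemma deg_step:
  assumes degs: "\<forall>j<n. is_deg n B0 (X j) (g j)"
    and posX: "\<forall>j<n. \<forall>x w. (\<forall>i<n. x i > 0) \<longrightarrow> (\<forall>v. w v > 0) \<longrightarrow> X j x w > 0"
    and hh: "\<forall>i<n. tdeg n B0 (y k) i + (\<Sum>j<n. Bt j k * g j i) = 0"
    and k: "k < n"
  shows "is_deg n B0 (mutX n d 1 k Bt y X k) (newg n d B0 k Bt y g k)"
  unfolding is_deg_def
proof (intro conjI allI impI)
  fix i :: nat assume "n \<le> i" then show "newg n d B0 k Bt y g k i = 0" by (simp add: newg_def)
next
  fix x w lam assume xp: "\<forall>i<n. 0 < (x::nat\<Rightarrow>real) i" and wp: "\<forall>v. 0 < (w::var\<Rightarrow>real) v"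
    and lp: "\<forall>i<n. 0 < (lam::nat\<Rightarrow>real) i"
  define x' where "x' = scaleX lam x"
  define w' where "w' = scaleW n B0 lam w"
  define L where "L = Lam n lam"
  have LL: "(\<Prod>i<n. lam i powi a i) = L a" for a unfolding L_def Lam_def by simp
  have HX: "X j x' w' = L (g j) * X j x w" if "j < n" for j
  proof -
    have "is_deg n B0 (X j) (g j)" using degs that by blast
    then show ?thesis using xp wp lp unfolding x'_def w'_def LL[symmetric] by (simp add: is_deg_def)
  qed
  have Hm: "mono n d w' e = L (tdeg n B0 e) * mono n d w e" for e
    unfolding w'_def L_def by (rule mono_scale[OF lp])
  define yh where "yh = mono n d w (y k) * (\<Prod>j<n. X j x w powi Bt j k)"
  have yh': "mono n d w' (y k) * (\<Prod>j<n. X j x' w' powi Bt j k) = yh"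
  proof -
    have "(\<Prod>j<n. X j x' w' powi Bt j k) = (\<Prod>j<n. L (g j) powi Bt j k * X j x w powi Bt j k)"
      by (rule prod.cong) (simp_all add: HX power_int_mult_distrib)
    also have "\<dots> = (\<Prod>j<n. L (g j) powi Bt j k) * (\<Prod>j<n. X j x w powi Bt j k)"
      by (rule prod.distrib)
    also have "(\<Prod>j<n. L (g j) powi Bt j k) = L (\<lambda>i. \<Sum>j<n. Bt j k * g j i)"
      unfolding L_def Lam_powi by (rule Lam_prod[OF lp])
    finally have "mono n d w' (y k) * (\<Prod>j<n. X j x' w' powi Bt j k) =
        (L (tdeg n B0 (y k)) * L (\<lambda>i. \<Sum>j<n. Bt j k * g j i)) * yh"
      unfolding Hm yh_def by (simp add: algebra_simps)
    also have "L (tdeg n B0 (y k)) * L (\<lambda>i. \<Sum>j<n. Bt j k * g j i) = L (\<lambda>i. 0)"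
      unfolding L_def Lam_add[OF lp, symmetric] by (rule Lam_cong) (use hh in auto)
    finally show ?thesis by (simp add: L_def Lam_zero)
  qed
  have S: "(\<Sum>s = 0..d k. mono n d w' (zvec d k s) * (mono n d w' (y k) * (\<Prod>j<n. X j x' w' powi Bt j k)) powi int s)
      = (\<Sum>s = 0..d k. mono n d w (zvec d k s) * yh powi int s)"
    unfolding yh' by (rule sum.cong) (simp_all add: Hm tdeg_zvec L_def Lam_zero)
  have P: "(\<Prod>j<n. X j x' w' powi pos (- Bt j k)) ^ d k
      = L (\<lambda>i. int (d k) * (\<Sum>j<n. pos (- Bt j k) * g j i)) * (\<Prod>j<n. X j x w powi pos (- Bt j k)) ^ d k"
  proof -
    have "(\<Prod>j<n. X j x' w' powi pos (- Bt j k)) = (\<Prod>j<n. L (g j) powi pos (- Bt j k) * X j x w powi pos (- Bt j k))"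
      by (rule prod.cong) (simp_all add: HX power_int_mult_distrib)
    also have "\<dots> = (\<Prod>j<n. L (g j) powi pos (- Bt j k)) * (\<Prod>j<n. X j x w powi pos (- Bt j k))"
      by (rule prod.distrib)
    also have "(\<Prod>j<n. L (g j) powi pos (- Bt j k)) = L (\<lambda>i. \<Sum>j<n. pos (- Bt j k) * g j i)"
      unfolding L_def Lam_powi by (rule Lam_prod[OF lp])
    finally show ?thesis by (simp add: power_mult_distrib L_def Lam_pow)
  qed
  have Xk: "X k x' w' powi (-1) = L (\<lambda>i. - g k i) * X k x w powi (-1)"
    unfolding HX[OF k] power_int_mult_distrib L_def Lam_inv ..
  have T: "mono n d w' (tsum d 1 k (y k)) = L (tdeg n B0 (tsum d 1 k (y k))) * mono n d w (tsum d 1 k (y k))"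
    by (rule Hm)
  define Sm where "Sm = (\<Sum>s = 0..d k. mono n d w (zvec d k s) * yh powi int s)"
  define Pr where "Pr = (\<Prod>j<n. X j x w powi pos (- Bt j k)) ^ d k"
  define Mt where "Mt = mono n d w (tsum d 1 k (y k))"
  have "mutX n d 1 k Bt y X k x' w' =
     (L (\<lambda>i. - g k i) * L (\<lambda>i. int (d k) * (\<Sum>j<n. pos (- Bt j k) * g j i)) / L (tdeg n B0 (tsum d 1 k (y k))))
     * (X k x w powi (-1) * Pr * Sm / Mt)"
    unfolding mutX_k S P Xk T Sm_def Pr_def Mt_def by simp
  also have "L (\<lambda>i. - g k i) * L (\<lambda>i. int (d k) * (\<Sum>j<n. pos (- Bt j k) * g j i)) / L (tdeg n B0 (tsum d 1 k (y k)))
       = L (newg n d B0 k Bt y g k)"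
    unfolding L_def Lam_add[OF lp, symmetric] Lam_div[OF lp]
    by (rule Lam_cong) (simp add: newg_def)
  also have "X k x w powi (-1) * Pr * Sm / Mt = mutX n d 1 k Bt y X k x w"
    unfolding mutX_k Sm_def Pr_def Mt_def yh_def by simp
  finally show "mutX n d 1 k Bt y X k (scaleX lam x) (scaleW n B0 lam w) =
       (\<Prod>i<n. lam i powi newg n d B0 k Bt y g k i) * mutX n d 1 k Bt y X k x w"
    unfolding x'_def w'_def LL .
qed



lemma Inv_step:
  assumes I: "Inv n d B0 (X, y, Bt) g" and k: "k < n"
  shows "Inv n d B0 (mut n d 1 k (X, y, Bt)) (newg n d B0 k Bt y g)"
proof -
  have degs: "\<forall>j<n. is_deg n B0 (X j) (g j)"
    and posX: "\<forall>j<n. \<forall>x w. (\<forall>i<n. x i > 0) \<longrightarrow> (\<forall>v. w v > 0) \<longrightarrow> X j x w > 0"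
    and hh: "\<forall>k<n. \<forall>i<n. tdeg n B0 (y k) i + (\<Sum>j<n. Bt j k * g j i) = 0"
    and sk: "skew_symmetrizable n Bt"
    using I unfolding Inv_def by auto
  have D1: "\<forall>j<n. is_deg n B0 (mutX n d 1 k Bt y X j) (newg n d B0 k Bt y g j)"
  proof (intro allI impI)
    fix j assume j: "j < n"
    show "is_deg n B0 (mutX n d 1 k Bt y X j) (newg n d B0 k Bt y g j)"
    proof (cases "j = k")
      case True
      have hk: "\<forall>i<n. tdeg n B0 (y k) i + (\<Sum>j<n. Bt j k * g j i) = 0" using hh k by blast
      show ?thesis unfolding True by (rule deg_step[where X=X and g=g and n=n and y=y and k=k and Bt=Bt, OF degs posX hk k])
    next
      case False
      then show ?thesis using degs j by (simp add: mutX_other newg_def)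
    qed
  qed
  have D2: "\<forall>j<n. \<forall>x w. (\<forall>i<n. x i > 0) \<longrightarrow> (\<forall>v. w v > 0) \<longrightarrow> mutX n d 1 k Bt y X j x w > 0"
  proof (intro allI impI)
    fix j x w assume j: "j < n" and xp: "\<forall>i<n. 0 < (x::nat\<Rightarrow>real) i" and wp: "\<forall>v. 0 < (w::var\<Rightarrow>real) v"
    show "mutX n d 1 k Bt y X j x w > 0"
    proof (cases "j = k")
      case True
      have Xp: "\<And>j. j < n \<Longrightarrow> X j x w > 0" using posX xp wp by blast
      have "(\<Sum>s = 0..d k. mono n d w (zvec d k s) * (mono n d w (y k) * (\<Prod>j<n. X j x w powi Bt j k)) powi int s) > 0"
      proof (rule sum_pos)
        have "mono n d w (y k) * (\<Prod>j<n. X j x w powi Bt j k) > 0"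
          by (auto intro!: mult_pos_pos mono_pos[OF wp] prod_pos zero_less_power_int Xp)
        then show "\<And>s. s \<in> {0..d k} \<Longrightarrow> 0 < mono n d w (zvec d k s) * (mono n d w (y k) * (\<Prod>j<n. X j x w powi Bt j k)) powi int s"
          using mono_pos[OF wp] by simp
      qed auto
      moreover have "(\<Prod>j<n. X j x w powi pos (- Bt j k)) ^ d k > 0"
        by (auto intro!: zero_less_power prod_pos zero_less_power_int Xp)
      moreover have "X k x w powi (-1) > 0" using Xp[OF k] by simp
      ultimately show ?thesis unfolding True mutX_k using mono_pos[OF wp] by simp
    next
      case False
      then show ?thesis using posX j xp wp by (simp add: mutX_other)
    qed
  qed
  have D3: "\<forall>k'<n. \<forall>i<n. tdeg n B0 (mutY d 1 k Bt y k') i + (\<Sum>j<n. mutB d k Bt j k' * newg n d B0 k Bt y g j i) = 0"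
  proof (intro allI impI)
    fix k' i assume k': "k' < n" and i: "i < n"
    define T where "T = tdeg n B0 (tsum d 1 k (y k)) i"
    have E1: "tdeg n B0 (mutY d 1 k Bt y k') i = (if k' = k then - tdeg n B0 (y k) i
       else tdeg n B0 (y k') i + int (d k) * pos (Bt k k') * tdeg n B0 (y k) i - Bt k k' * T)"
    proof (cases "k' = k")
      case True then show ?thesis by (simp add: mutY_def tdeg_neg)
    next
      case False
      have "mutY d 1 k Bt y k' = (\<lambda>v. y k' v + (int (d k) * pos (Bt k k')) * y k v - Bt k k' * tsum d 1 k (y k) v)"
        using False by (simp add: mutY_def)
      then show ?thesis using False unfolding T_def by (simp only: tdeg_lin) simp
    qed
    have E2: "(\<Sum>j<n. mutB d k Bt j k' * newg n d B0 k Bt y g j i) =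
      (\<Sum>j<n. (if j = k \<or> k' = k then - Bt j k' else Bt j k' + int (d k) * (pos (- Bt j k) * Bt k k' + Bt j k * pos (Bt k k')))
        * (if j = k then - g k i + int (d k) * (\<Sum>j<n. pos (- Bt j k) * g j i) - T else g j i))"
      by (rule sum.cong) (auto simp: mutB_def newg_def i T_def)
    have hi: "\<forall>k'<n. tdeg n B0 (y k') i + (\<Sum>j<n. Bt j k' * g j i) = 0" using hh i by blast
    show "tdeg n B0 (mutY d 1 k Bt y k') i + (\<Sum>j<n. mutB d k Bt j k' * newg n d B0 k Bt y g j i) = 0"
      unfolding E1 E2
      by (rule h_step[where b = Bt and a = "\<lambda>k'. tdeg n B0 (y k') i" and g = "\<lambda>j. g j i", OF k k' skew_diag[OF sk k] hi])
  qed
  show ?thesis unfolding mut_def Inv_def using D1 D2 D3 skew_mut[OF sk k] by simp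
qed



definition g0 :: "nat \<Rightarrow> nat \<Rightarrow> int" where "g0 = (\<lambda>j i. if i = j then 1 else 0)"

lemma Inv_init:
  assumes sk: "skew_symmetrizable n B0"
  shows "Inv n d B0 (seed0 B0) g0"
proof -
  have D1: "is_deg n B0 (\<lambda>x w. x j) (g0 j)" if j: "j < n" for j
    unfolding is_deg_def
  proof (intro conjI allI impI)
    fix i :: nat assume "n \<le> i" then show "g0 j i = 0" using j by (simp add: g0_def)
  next
    fix x w lam assume "\<forall>i<n. 0 < (x::nat\<Rightarrow>real) i" "\<forall>v. 0 < (w::var\<Rightarrow>real) v" "\<forall>i<n. 0 < (lam::nat\<Rightarrow>real) i"
    have "(\<Prod>i<n. lam i powi g0 j i) = (\<Prod>i<n. if i = j then lam i else 1)"
      by (rule prod.cong) (auto simp: g0_def)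
    also have "\<dots> = lam j" using j by (simp add: prod.delta)
    finally show "scaleX lam x j = (\<Prod>i<n. lam i powi g0 j i) * x j" by (simp add: scaleX_def)
  qed
  have D3: "tdeg n B0 (yvec k) i + (\<Sum>j<n. B0 j k * g0 j i) = 0" if "k < n" "i < n" for k i
  proof -
    have "(\<Sum>j<n. B0 i j * yvec k (Y j)) = (\<Sum>j<n. if j = k then B0 i j else 0)"
      by (rule sum.cong) (auto simp: yvec_def)
    also have "\<dots> = B0 i k" using that by (simp add: sum.delta)
    finally have a: "tdeg n B0 (yvec k) i = - B0 i k" using that by (simp add: tdeg_def)
    have "(\<Sum>j<n. B0 j k * g0 j i) = (\<Sum>j<n. if j = i then B0 j k else 0)"
      by (rule sum.cong) (auto simp: g0_def)
    also have "\<dots> = B0 i k" using that by (simp add: sum.delta)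
    finally show ?thesis using a by simp
  qed
  show ?thesis unfolding Inv_def seed0_def using D1 D3 sk by auto
qed

definition gpat :: "nat \<Rightarrow> (nat \<Rightarrow> nat) \<Rightarrow> (nat \<Rightarrow> nat \<Rightarrow> int) \<Rightarrow> nat list \<Rightarrow> seed \<times> (nat \<Rightarrow> nat \<Rightarrow> int)" where
  "gpat n d B0 ks = foldl (\<lambda>p k. (mut n d 1 k (fst p), newg n d B0 k (snd (snd (fst p))) (fst (snd (fst p))) (snd p)))
      (seed0 B0, g0) ks"

lemma gpat_snoc: "gpat n d B0 (ks @ [k]) = (mut n d 1 k (fst (gpat n d B0 ks)),
   newg n d B0 k (snd (snd (fst (gpat n d B0 ks)))) (fst (snd (fst (gpat n d B0 ks)))) (snd (gpat n d B0 ks)))"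
  unfolding gpat_def by simp

lemma gpat_fst: "fst (gpat n d B0 ks) = pattern n d B0 ks"
  by (induction ks rule: rev_induct) (simp_all add: gpat_snoc pattern_def gpat_def[of _ _ _ "[]"])

lemma Inv_gpat:
  assumes sk: "skew_symmetrizable n B0"
  shows "set ks \<subseteq> {..<n} \<Longrightarrow> Inv n d B0 (fst (gpat n d B0 ks)) (snd (gpat n d B0 ks))"
proof (induction ks rule: rev_induct)
  case Nil then show ?case using Inv_init[OF sk] by (simp add: gpat_def)
next
  case (snoc k ks)
  obtain X y Bt where S: "fst (gpat n d B0 ks) = (X, y, Bt)" by (metis prod_cases3)
  have "Inv n d B0 (X, y, Bt) (snd (gpat n d B0 ks))" using snoc S by simp
  moreover have "k < n" using snoc by simp
  ultimately show ?case using Inv_step by (simp add: gpat_snoc S)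
qed

lemma min_scale: "(c::int) \<ge> 0 \<Longrightarrow> c * min 0 a = min 0 (c * a)"
proof (cases "a \<ge> 0")
  case True
  assume "c \<ge> 0"
  then have "c * a \<ge> 0" using True by simp
  then show ?thesis using True by simp
next
  case False
  assume "c \<ge> 0"
  then have "c * a \<le> 0" using False by (simp add: mult_nonneg_nonpos)
  then show ?thesis using False by (simp add: min_def)
qed

definition Rel :: "nat \<Rightarrow> (nat \<Rightarrow> nat) \<Rightarrow> seed \<times> (nat \<Rightarrow> nat \<Rightarrow> int) \<Rightarrow> seed \<times> (nat \<Rightarrow> nat \<Rightarrow> int) \<Rightarrow> bool" where
  "Rel n d p1 p2 \<longleftrightarrow> (\<forall>i j. snd (snd (fst p2)) i j = snd (snd (fst p1)) i j * int (d j)) \<and>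
     (\<forall>i j. fst (snd (fst p2)) i (Y j) * int (d j) = fst (snd (fst p1)) i (Y j) * int (d i)) \<and>
     snd p1 = snd p2"

lemma Rel_gpat: "Rel n d (gpat n d B ks) (gpat n (\<lambda>_. 1) (matD B d) ks)"
proof (induction ks rule: rev_induct)
  case Nil then show ?case by (simp add: gpat_def Rel_def seed0_def matD_def yvec_def)
next
  case (snoc k ks)
  obtain X1 y1 B1 g1 where S1: "gpat n d B ks = ((X1, y1, B1), g1)" by (metis prod_cases3 surj_pair)
  obtain X2 y2 B2 g2 where S2: "gpat n (\<lambda>_. 1) (matD B d) ks = ((X2, y2, B2), g2)" by (metis prod_cases3 surj_pair)
  have RB: "\<And>i j. B2 i j = B1 i j * int (d j)" and Ry: "\<And>i j. y2 i (Y j) * int (d j) = y1 i (Y j) * int (d i)"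
    and Rg: "g1 = g2"
    using snoc S1 S2 unfolding Rel_def by auto
  have NB: "mutB (\<lambda>_. 1) k B2 i j = mutB d k B1 i j * int (d j)" for i j
  proof -
    have "pos (- (B1 i k * int (d k))) = int (d k) * pos (- B1 i k)"
      using pos_mult[of "int (d k)" "- B1 i k"] by (simp add: algebra_simps)
    moreover have "pos (B1 k j * int (d j)) = int (d j) * pos (B1 k j)"
      using pos_mult[of "int (d j)" "B1 k j"] by (simp add: algebra_simps)
    ultimately show ?thesis unfolding mutB_def RB by (simp add: algebra_simps)
  qed
  have Nmin: "min 0 (y2 k (Y j)) * int (d j) = int (d k) * min 0 (y1 k (Y j))" for j
  proof -
    have "min 0 (y2 k (Y j)) * int (d j) = min 0 (int (d j) * y2 k (Y j))"
      using min_scale[of "int (d j)" "y2 k (Y j)"] by (simp add: mult.commute)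
    also have "\<dots> = min 0 (int (d k) * y1 k (Y j))" using Ry[of k j] by (simp add: mult.commute)
    also have "\<dots> = int (d k) * min 0 (y1 k (Y j))" using min_scale[of "int (d k)" "y1 k (Y j)"] by simp
    finally show ?thesis .
  qed
  have Ny: "mutY (\<lambda>_. 1) 1 k B2 y2 i (Y j) * int (d j) = mutY d 1 k B1 y1 i (Y j) * int (d i)" for i j
  proof (cases "i = k")
    case True then show ?thesis using Ry[of k j] by (simp add: mutY_def)
  next
    case False
    have p: "pos (B1 k i * int (d i)) = int (d i) * pos (B1 k i)"
      using pos_mult[of "int (d i)" "B1 k i"] by (simp add: algebra_simps)
    have "mutY (\<lambda>_. 1) 1 k B2 y2 i (Y j) * int (d j) =
        y2 i (Y j) * int (d j) + pos (B1 k i * int (d i)) * (y2 k (Y j) * int (d j))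
        - B1 k i * int (d i) * (min 0 (y2 k (Y j)) * int (d j))"
      using False by (simp add: mutY_def tsum_Y RB algebra_simps)
    also have "\<dots> = mutY d 1 k B1 y1 i (Y j) * int (d i)"
      unfolding Nmin Ry p using False by (simp add: mutY_def tsum_Y algebra_simps)
    finally show ?thesis .
  qed
  have Ng: "newg n d B k B1 y1 g1 = newg n (\<lambda>_. 1) (matD B d) k B2 y2 g2"
  proof -
    have s1: "int (d k) * (\<Sum>j<n. pos (- B1 j k) * g2 j i) = (\<Sum>j<n. pos (- B2 j k) * g2 j i)" for i
      unfolding sum_distrib_left
    proof (rule sum.cong)
      fix j show "int (d k) * (pos (- B1 j k) * g2 j i) = pos (- B2 j k) * g2 j i"
        using pos_mult[of "int (d k)" "- B1 j k"] by (simp add: RB algebra_simps)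
    qed simp
    have s2: "tdeg n B (tsum d 1 k (y1 k)) i = tdeg n (matD B d) (tsum (\<lambda>_. 1) 1 k (y2 k)) i" for i
    proof -
      have "(\<Sum>j<n. B i j * tsum d 1 k (y1 k) (Y j)) = (\<Sum>j<n. matD B d i j * tsum (\<lambda>_. 1) 1 k (y2 k) (Y j))"
      proof (rule sum.cong)
        fix j show "B i j * tsum d 1 k (y1 k) (Y j) = matD B d i j * tsum (\<lambda>_. 1) 1 k (y2 k) (Y j)"
          using Nmin[of j] by (simp add: tsum_Y matD_def algebra_simps)
      qed simp
      then show ?thesis by (simp add: tdeg_def)
    qed
    show ?thesis unfolding newg_def Rg using s1 s2 by (auto intro!: ext)
  qed
  show ?case unfolding Rel_def gpat_snoc S1 S2 using NB Ny Ng by (simp add: mut_def)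
qed

lemma deg_unique:
  assumes "is_deg n B0 f g1" "is_deg n B0 f g2"
    and fp: "\<forall>x w. (\<forall>i<n. x i > 0) \<longrightarrow> (\<forall>v. w v > 0) \<longrightarrow> f x w > 0"
  shows "g1 = g2"
proof (rule ext)
  fix i show "g1 i = g2 i"
  proof (cases "i < n")
    case False then show ?thesis using assms unfolding is_deg_def by simp
  next
    case True
    define lam :: "nat \<Rightarrow> real" where "lam = (\<lambda>l. if l = i then 2 else 1)"
    define x :: "nat \<Rightarrow> real" where "x = (\<lambda>_. 1)"
    define w :: "var \<Rightarrow> real" where "w = (\<lambda>_. 1)"
    have lp: "\<forall>l<n. lam l > 0" unfolding lam_def by simp
    have xp: "\<forall>l<n. x l > 0" unfolding x_def by simp
    have wp: "\<forall>v. w v > 0" unfolding w_def by simp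
    have L: "(\<Prod>l<n. lam l powi g l) = 2 powi g i" for g
    proof -
      have "(\<Prod>l<n. lam l powi g l) = (\<Prod>l<n. if l = i then 2 powi g i else 1)"
        by (rule prod.cong) (auto simp: lam_def)
      then show ?thesis using True by (simp add: prod.delta)
    qed
    have e1: "f (scaleX lam x) (scaleW n B0 lam w) = 2 powi g1 i * f x w"
    proof -
      have "\<forall>x w lam. (\<forall>i<n. x i > 0) \<longrightarrow> (\<forall>v. w v > 0) \<longrightarrow> (\<forall>i<n. lam i > 0) \<longrightarrow>
        f (scaleX lam x) (scaleW n B0 lam w) = (\<Prod>i<n. lam i powi g1 i) * f x w"
        using assms(1) unfolding is_deg_def by blast
      then have "f (scaleX lam x) (scaleW n B0 lam w) = (\<Prod>i<n. lam i powi g1 i) * f x w"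
        using lp xp wp by blast
      then show ?thesis unfolding L .
    qed
    have e2: "f (scaleX lam x) (scaleW n B0 lam w) = 2 powi g2 i * f x w"
    proof -
      have "\<forall>x w lam. (\<forall>i<n. x i > 0) \<longrightarrow> (\<forall>v. w v > 0) \<longrightarrow> (\<forall>i<n. lam i > 0) \<longrightarrow>
        f (scaleX lam x) (scaleW n B0 lam w) = (\<Prod>i<n. lam i powi g2 i) * f x w"
        using assms(2) unfolding is_deg_def by blast
      then have "f (scaleX lam x) (scaleW n B0 lam w) = (\<Prod>i<n. lam i powi g2 i) * f x w"
        using lp xp wp by blast
      then show ?thesis unfolding L .
    qed
    have "f x w > 0" using fp xp wp by blast
    then have eq: "(2::real) powi g1 i = 2 powi g2 i" using e1 e2 by simp
    show ?thesis
    proof (rule linorder_cases[of "g1 i" "g2 i"])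
      assume "g1 i < g2 i"
      then have "(2::real) powi g1 i < 2 powi g2 i" by (rule power_int_strict_increasing) simp
      then show ?thesis using eq by simp
    next
      assume "g2 i < g1 i"
      then have "(2::real) powi g2 i < 2 powi g1 i" by (rule power_int_strict_increasing) simp
      then show ?thesis using eq by simp
    qed
  qed
qed

lemma Gmat_eq:
  assumes sk: "skew_symmetrizable n B0" and ks: "set ks \<subseteq> {..<n}" and j: "j < n"
  shows "(\<lambda>i. Gmat n d B0 ks i j) = snd (gpat n d B0 ks) j"
proof -
  obtain X y Bt where S: "fst (gpat n d B0 ks) = (X, y, Bt)" by (metis prod_cases3)
  have I: "Inv n d B0 (X, y, Bt) (snd (gpat n d B0 ks))" using Inv_gpat[where d=d, OF sk ks] S by simp
  have Xf: "Xfun n d B0 ks j = X j" unfolding Xfun_def gpat_fst[symmetric] S by simp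
  have d: "is_deg n B0 (X j) (snd (gpat n d B0 ks) j)" using I j unfolding Inv_def by auto
  have p: "\<forall>x w. (\<forall>i<n. x i > 0) \<longrightarrow> (\<forall>v. w v > 0) \<longrightarrow> X j x w > 0" using I j unfolding Inv_def by auto
  have "(THE g. is_deg n B0 (Xfun n d B0 ks j) g) = snd (gpat n d B0 ks) j"
    unfolding Xf by (rule the_equality[where P="is_deg n B0 (X j)", OF d]) (rule deg_unique[OF _ d p])
  then show ?thesis unfolding Gmat_def by simp
qed

theorem mainTheorem12:
  fixes n :: nat and B :: "nat \<Rightarrow> nat \<Rightarrow> int" and d :: "nat \<Rightarrow> nat" and t :: "nat list"
  assumes "skew_symmetrizable n B"
    and "\<forall>i<n. d i > 0"
    and "vertex n t"
  shows "\<forall>i<n. \<forall>j<n. Gmat n d B t i j = Gmat n (\<lambda>_. 1) (matD B d) t i j"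
proof (intro allI impI)
  fix i j assume i: "i < n" and j: "j < n"
  have ks: "set t \<subseteq> {..<n}" using assms(3) unfolding vertex_def by simp
  obtain r where rp: "\<forall>i<n. r i > 0" and rs: "\<forall>i<n. \<forall>j<n. r i * B i j = - (r j * B j i)"
    using assms(1) unfolding skew_symmetrizable_def by blast
  have sk2: "skew_symmetrizable n (matD B d)"
    unfolding skew_symmetrizable_def
  proof (intro exI[of _ "\<lambda>i. r i * int (d i)"] conjI allI impI)
    fix i assume "i < n" then show "0 < r i * int (d i)" using rp assms(2) by simp
  next
    fix i j assume "i < n" "j < n"
    then have eq: "r i * B i j = - (r j * B j i)" using rs by blast
    have "r i * int (d i) * matD B d i j = (r i * B i j) * (int (d i) * int (d j))" by (simp add: matD_def algebra_simps)
    also have "\<dots> = - (r j * B j i) * (int (d i) * int (d j))" using eq by simp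
    also have "\<dots> = - (r j * int (d j) * matD B d j i)" by (simp add: matD_def algebra_simps)
    finally show "r i * int (d i) * matD B d i j = - (r j * int (d j) * matD B d j i)" .
  qed
  have "snd (gpat n d B t) = snd (gpat n (\<lambda>_. 1) (matD B d) t)"
    using Rel_gpat[of n d B t] unfolding Rel_def by simp
  then have "(\<lambda>i. Gmat n d B t i j) = (\<lambda>i. Gmat n (\<lambda>_. 1) (matD B d) t i j)"
    using Gmat_eq[where d=d, OF assms(1) ks j] Gmat_eq[where d="\<lambda>_. 1", OF sk2 ks j] by simp
  then show "Gmat n d B t i j = Gmat n (\<lambda>_. 1) (matD B d) t i j" by (rule fun_cong)
qed

end
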